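(* Let $G$ be a graph, $X\subseteq V(G)$ with $F:=G-X$ a pseudoforest, and $k$ an integer. Assume that: (1) there is no $v\in X$ with $\mathrm{Conf}_F(\{v\})\ge |X|$; (2) there are no distinct non-adjacent $u,v\in X$ with $\mathrm{Conf}_F(\{u,v\})\ge|X|$; (3) for all distinct $u,v,w\in X$ such that $\{u,v,w\}$ is independent in $G$ and $\mathrm{Conf}_F(\{u,v,w\})\ge|X|$, there is an anchor triangle $P$ with $N_G(V(P))=\{u,v,w\}$; (4) there is no connected component $P$ of $F$ which is not a non-redundant anchor triangle and satisfies $\mathrm{Conf}_P(X')=0$ for every chunk $X'$. Then the number of connected components of $F$ is at most $|X|^4+|X|^3$.
   Context: All graphs are finite, simple and undirected; a pseudoforest is a graph each of whose connected components contains at most one cycle. $\alpha(H)$ is the independence number of $H$. For a subgraph $F'\subseteq F$ and $X'\subseteq X$, $\mathrm{Conf}_{F'}(X') := \alpha(F') - \alpha(F' - N_G(X'))$, where $N_G(S)$ is the set of vertices outside $S$ adjacent to some vertex of $S$. A chunk is a set $X'\subseteq X$ that is independent in $G$, satisfies $1\le |X'|\le 3$, and has $\mathrm{Conf}_F(X') < |X|$. An anchor triangle is a connected component $P$ of $F$ with $V(P)=\{p_1,p_2,p_3\}$ such that there are vertices $x_1,x_2,x_3\in X$ with $N_G(p_1)=\{p_2,p_3,x_1\}$, $N_G(p_2)=\{p_1,p_3,x_2\}$, $N_G(p_3)=\{p_1,p_2,x_3\}$; it is non-redundant if no other anchor triangle has the same open neighborhood in $G$. *)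

theory Defs
  imports Main
begin

text \<open>All subgraphs
occurring in the statement (F = G - X, components of F, P - N(X')) are induced
subgraphs of G, so they are represented by their vertex sets.\<close>

definition simple_graph :: "'a set \<Rightarrow> ('a \<Rightarrow> 'a \<Rightarrow> bool) \<Rightarrow> bool" where
  "simple_graph V E \<longleftrightarrow> finite V \<and> (\<forall>u v. E u v \<longrightarrow> E v u) \<and> (\<forall>v. \<not> E v v)
     \<and> (\<forall>u v. E u v \<longrightarrow> u \<in> V \<and> v \<in> V)"

definition nbh :: "'a set \<Rightarrow> ('a \<Rightarrow> 'a \<Rightarrow> bool) \<Rightarrow> 'a set \<Rightarrow> 'a set" where
  "nbh V E S = {v \<in> V - S. \<exists>u\<in>S. E u v}"

definition indep :: "'a set \<Rightarrow> ('a \<Rightarrow> 'a \<Rightarrow> bool) \<Rightarrow> 'a set \<Rightarrow> bool" where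
  "indep V E I \<longleftrightarrow> I \<subseteq> V \<and> (\<forall>u\<in>I. \<forall>v\<in>I. \<not> E u v)"

definition alpha :: "'a set \<Rightarrow> ('a \<Rightarrow> 'a \<Rightarrow> bool) \<Rightarrow> 'a set \<Rightarrow> nat" where
  "alpha V E S = Max {card I | I. I \<subseteq> S \<and> indep V E I}"

definition Conf :: "'a set \<Rightarrow> ('a \<Rightarrow> 'a \<Rightarrow> bool) \<Rightarrow> 'a set \<Rightarrow> 'a set \<Rightarrow> int" where
  "Conf V E F' X' = int (alpha V E F') - int (alpha V E (F' - nbh V E X'))"

definition reach_in :: "('a \<Rightarrow> 'a \<Rightarrow> bool) \<Rightarrow> 'a set \<Rightarrow> 'a \<Rightarrow> 'a \<Rightarrow> bool" where
  "reach_in E S = (\<lambda>u v. u \<in> S \<and> v \<in> S \<and> E u v)\<^sup>*\<^sup>*"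

definition components :: "('a \<Rightarrow> 'a \<Rightarrow> bool) \<Rightarrow> 'a set \<Rightarrow> 'a set set" where
  "components E S = {{v \<in> S. reach_in E S u v} | u. u \<in> S}"

definition is_cycle :: "('a \<Rightarrow> 'a \<Rightarrow> bool) \<Rightarrow> 'a set \<Rightarrow> 'a list \<Rightarrow> bool" where
  "is_cycle E S cs \<longleftrightarrow> distinct cs \<and> length cs \<ge> 3 \<and> set cs \<subseteq> S \<and>
     (\<forall>i < length cs. E (cs ! i) (cs ! ((i + 1) mod length cs)))"

definition cycle_edges :: "'a list \<Rightarrow> 'a set set" where
  "cycle_edges cs = {{cs ! i, cs ! ((i + 1) mod length cs)} | i. i < length cs}"

text \<open>G[S] is a pseudoforest: each connected component contains at most one cycle
(two cycles are the same iff they have the same edge set).\<close>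
definition pseudoforest :: "('a \<Rightarrow> 'a \<Rightarrow> bool) \<Rightarrow> 'a set \<Rightarrow> bool" where
  "pseudoforest E S \<longleftrightarrow> (\<forall>C \<in> components E S. \<forall>c1 c2.
      is_cycle E C c1 \<and> is_cycle E C c2 \<longrightarrow> cycle_edges c1 = cycle_edges c2)"

definition anchor_triangle :: "'a set \<Rightarrow> ('a \<Rightarrow> 'a \<Rightarrow> bool) \<Rightarrow> 'a set \<Rightarrow> 'a set \<Rightarrow> bool" where
  "anchor_triangle V E X P \<longleftrightarrow> P \<in> components E (V - X) \<and>
     (\<exists>p1 p2 p3 x1 x2 x3. P = {p1, p2, p3} \<and> card P = 3 \<and>
        x1 \<in> X \<and> x2 \<in> X \<and> x3 \<in> X \<and>
        nbh V E {p1} = {p2, p3, x1} \<and> nbh V E {p2} = {p1, p3, x2} \<and>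
        nbh V E {p3} = {p1, p2, x3})"

definition nonredundant_anchor_triangle :: "'a set \<Rightarrow> ('a \<Rightarrow> 'a \<Rightarrow> bool) \<Rightarrow> 'a set \<Rightarrow> 'a set \<Rightarrow> bool" where
  "nonredundant_anchor_triangle V E X P \<longleftrightarrow> anchor_triangle V E X P \<and>
     \<not> (\<exists>P'. P' \<noteq> P \<and> anchor_triangle V E X P' \<and> nbh V E P' = nbh V E P)"

definition chunk :: "'a set \<Rightarrow> ('a \<Rightarrow> 'a \<Rightarrow> bool) \<Rightarrow> 'a set \<Rightarrow> 'a set \<Rightarrow> bool" where
  "chunk V E X X' \<longleftrightarrow> X' \<subseteq> X \<and> indep V E X' \<and> 1 \<le> card X' \<and> card X' \<le> 3 \<and>
     Conf V E (V - X) X' < int (card X)"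

end

theory Submission
  imports Defs
begin

lemma reach_sym:
  assumes sym: "\<forall>u v. E u v \<longrightarrow> E v u" and r: "reach_in E S u v"
  shows "reach_in E S v u"
  using r unfolding reach_in_def
proof (induction rule: rtranclp.induct)
  case (rtrancl_refl a) then show ?case by simp
next
  case (rtrancl_into_rtrancl a b c)
  then have "c \<in> S \<and> b \<in> S \<and> E c b" using sym by blast
  then show ?case using rtrancl_into_rtrancl.IH by (rule converse_rtranclp_into_rtranclp)
qed

lemma reach_trans: "reach_in E S u v \<Longrightarrow> reach_in E S v w \<Longrightarrow> reach_in E S u w"
  unfolding reach_in_def by (rule rtranclp_trans)

lemma reach_edge: "u \<in> S \<Longrightarrow> v \<in> S \<Longrightarrow> E u v \<Longrightarrow> reach_in E S u v"
  unfolding reach_in_def by (rule r_into_rtranclp) simp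

lemma reach_refl: "reach_in E S u u"
  unfolding reach_in_def by simp

lemma comp_disj:
  assumes sym: "\<forall>u v. E u v \<longrightarrow> E v u"
    and P: "P \<in> components E S" and Q: "Q \<in> components E S" and w: "w \<in> P" "w \<in> Q"
  shows "P = Q"
proof -
  obtain u where u: "u \<in> S" "P = {v \<in> S. reach_in E S u v}" using P unfolding components_def by blast
  obtain u' where u': "u' \<in> S" "Q = {v \<in> S. reach_in E S u' v}" using Q unfolding components_def by blast
  have r1: "reach_in E S u w" using u w by simp
  have r2: "reach_in E S u' w" using u' w by simp
  have r3: "reach_in E S w u'" by (rule reach_sym[OF sym r2])
  have r4: "reach_in E S u u'" by (rule reach_trans[OF r1 r3])
  have r5: "reach_in E S u' u" by (rule reach_sym[OF sym r4])
  have "\<And>v. reach_in E S u v \<longleftrightarrow> reach_in E S u' v"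
  proof
    fix v assume "reach_in E S u v" then show "reach_in E S u' v" by (rule reach_trans[OF r5])
  next
    fix v assume "reach_in E S u' v" then show "reach_in E S u v" by (rule reach_trans[OF r4])
  qed
  then show ?thesis using u(2) u'(2) by simp
qed

lemma comp_edge:
  assumes sym: "\<forall>u v. E u v \<longrightarrow> E v u"
    and P: "P \<in> components E S" and Q: "Q \<in> components E S" and xy: "x \<in> P" "y \<in> Q" "E x y"
  shows "P = Q"
proof -
  obtain u where u: "u \<in> S" "P = {v \<in> S. reach_in E S u v}" using P unfolding components_def by blast
  have QS: "Q \<subseteq> S" using Q unfolding components_def by blast
  have xS: "x \<in> S" and ux: "reach_in E S u x" using u xy by auto
  have yS: "y \<in> S" using QS xy by blast
  have "reach_in E S u y" by (rule reach_trans[OF ux reach_edge[of x S y E, OF xS yS xy(3)]])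
  then have "y \<in> P" using u yS by simp
  then show ?thesis by (rule comp_disj[OF sym P Q _ xy(2)])
qed

lemma comp_union: "\<Union> (components E S) = S"
proof
  show "\<Union> (components E S) \<subseteq> S" unfolding components_def by auto
  show "S \<subseteq> \<Union> (components E S)"
  proof
    fix u assume u: "u \<in> S"
    have "{v \<in> S. reach_in E S u v} \<in> components E S" unfolding components_def using u by blast
    moreover have "u \<in> {v \<in> S. reach_in E S u v}" using u reach_refl by simp
    ultimately show "u \<in> \<Union> (components E S)" by blast
  qed
qed

lemma comp_sub: "P \<in> components E S \<Longrightarrow> P \<subseteq> S"
  unfolding components_def by blast

lemma comp_finite: "finite S \<Longrightarrow> finite (components E S)"
proof -
  assume "finite S"
  moreover have "components E S \<subseteq> Pow S" unfolding components_def by blast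
  ultimately show ?thesis by (meson finite_Pow_iff finite_subset)
qed

lemma alpha_set_fin:
  assumes "finite S" shows "finite {card I | I. I \<subseteq> S \<and> indep V E I}"
proof -
  have "{card I | I. I \<subseteq> S \<and> indep V E I} \<subseteq> {..card S}"
  proof
    fix k assume "k \<in> {card I | I. I \<subseteq> S \<and> indep V E I}"
    then obtain I where "k = card I" "I \<subseteq> S" by blast
    then show "k \<in> {..card S}" using card_mono[OF assms] by simp
  qed
  then show ?thesis using finite_subset by blast
qed

lemma indep_empty: "indep V E {}" unfolding indep_def by simp

lemma alpha_ge: "finite S \<Longrightarrow> I \<subseteq> S \<Longrightarrow> indep V E I \<Longrightarrow> card I \<le> alpha V E S"
  unfolding alpha_def by (rule Max_ge[OF alpha_set_fin]) auto

lemma alpha_ex: assumes "finite S" shows "\<exists>I. I \<subseteq> S \<and> indep V E I \<and> card I = alpha V E S"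
proof -
  have ne: "{card I | I. I \<subseteq> S \<and> indep V E I} \<noteq> {}"
  proof -
    have "card ({}::'a set) \<in> {card I | I. I \<subseteq> S \<and> indep V E I}" using indep_empty[of V E] by blast
    then show ?thesis by blast
  qed
  have "alpha V E S \<in> {card I | I. I \<subseteq> S \<and> indep V E I}"
    unfolding alpha_def by (rule Max_in[OF alpha_set_fin[OF assms] ne])
  then obtain I where "alpha V E S = card I" "I \<subseteq> S" "indep V E I" by blast
  then show ?thesis by auto
qed

lemma alpha_mono: assumes "finite T" "S \<subseteq> T" shows "alpha V E S \<le> alpha V E T"
proof -
  have "finite S" by (rule finite_subset[OF assms(2,1)])
  then obtain I where I: "I \<subseteq> S" "indep V E I" "card I = alpha V E S" by (metis alpha_ex)
  have "I \<subseteq> T" using I(1) assms(2) by (rule subset_trans)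
  then have "card I \<le> alpha V E T" by (rule alpha_ge[OF assms(1) _ I(2)])
  then show ?thesis using I(3) by simp
qed

lemma indep_sub: "indep V E I \<Longrightarrow> J \<subseteq> I \<Longrightarrow> indep V E J"
  unfolding indep_def by blast


lemma conf_nonneg: assumes "finite P" shows "Conf V E P Y \<ge> 0"
proof -
  have "alpha V E (P - nbh V E Y) \<le> alpha V E P" by (rule alpha_mono[OF assms]) blast
  then show ?thesis unfolding Conf_def by simp
qed

lemma conf_count:
  assumes G: "simple_graph V E" and AV: "A \<subseteq> V"
  shows "int (card {P \<in> components E A. Conf V E P Y \<noteq> 0}) \<le> Conf V E A Y"
proof -
  have sym: "\<forall>u v. E u v \<longrightarrow> E v u" using G unfolding simple_graph_def by blast
  have finV: "finite V" using G unfolding simple_graph_def by blast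
  have finA: "finite A" by (rule finite_subset[OF AV finV])
  define C where "C = components E A"
  define N where "N = nbh V E Y"
  have finC: "finite C" unfolding C_def by (rule comp_finite[OF finA])
  have Csub: "\<And>P. P \<in> C \<Longrightarrow> P \<subseteq> A" unfolding C_def by (rule comp_sub)
  have finP: "\<And>P. P \<in> C \<Longrightarrow> finite P" using Csub finA by (rule finite_subset)
  have "\<forall>P\<in>C. \<exists>I. I \<subseteq> P \<and> indep V E I \<and> card I = alpha V E P"
  proof
    fix P assume "P \<in> C" then show "\<exists>I. I \<subseteq> P \<and> indep V E I \<and> card I = alpha V E P"
      by (intro alpha_ex finP)
  qed
  then obtain f where f: "\<And>P. P \<in> C \<Longrightarrow> f P \<subseteq> P \<and> indep V E (f P) \<and> card (f P) = alpha V E P"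
    by (metis (no_types, lifting))
  define U where "U = \<Union> (f ` C)"
  have UA: "U \<subseteq> A"
  proof
    fix x assume "x \<in> U"
    then obtain P where "P \<in> C" "x \<in> f P" unfolding U_def by blast
    then show "x \<in> A" using f[of P] Csub[of P] by blast
  qed
  have Uind: "indep V E U"
    unfolding indep_def
  proof (intro conjI ballI)
    show "U \<subseteq> V" using UA AV by (rule subset_trans)
  next
    fix u v assume uv: "u \<in> U" "v \<in> U"
    show "\<not> E u v"
    proof
      assume e: "E u v"
      obtain P where P: "P \<in> C" "u \<in> f P" using uv(1) unfolding U_def by blast
      obtain Q where Q: "Q \<in> C" "v \<in> f Q" using uv(2) unfolding U_def by blast
      have "u \<in> P" using P f[of P] by blast
      moreover have "v \<in> Q" using Q f[of Q] by blast
      ultimately have "P = Q" using comp_edge[OF sym, of P A Q u v] P(1) Q(1) e unfolding C_def by blast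
      then have "v \<in> f P" using Q by simp
      moreover have "indep V E (f P)" using f[OF P(1)] by blast
      ultimately show False using P(2) e unfolding indep_def by blast
    qed
  qed
  have fin_f: "\<forall>P\<in>C. finite (f P)"
  proof
    fix P assume "P \<in> C" then show "finite (f P)" using f[of P] finP[of P] finite_subset by blast
  qed
  have disj_f: "\<forall>P\<in>C. \<forall>Q\<in>C. P \<noteq> Q \<longrightarrow> f P \<inter> f Q = {}"
  proof (intro ballI impI)
    fix P Q assume PQ: "P \<in> C" "Q \<in> C" "P \<noteq> Q"
    show "f P \<inter> f Q = {}"
    proof (rule ccontr)
      assume "f P \<inter> f Q \<noteq> {}"
      then obtain w where "w \<in> f P" "w \<in> f Q" by blast
      then have "w \<in> P" "w \<in> Q" using f[OF PQ(1)] f[OF PQ(2)] by blast+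
      then have "P = Q" using comp_disj[OF sym, of P A Q w] PQ unfolding C_def by blast
      then show False using PQ(3) by simp
    qed
  qed
  have "card U = (\<Sum>P\<in>C. card (f P))"
    unfolding U_def by (rule card_UN_disjoint[OF finC fin_f disj_f])
  also have "\<dots> = (\<Sum>P\<in>C. alpha V E P)" using f by (intro sum.cong) auto
  finally have s1: "(\<Sum>P\<in>C. alpha V E P) \<le> alpha V E A"
    using alpha_ge[OF finA UA Uind] by simp
  have "finite (A - N)" using finA by simp
  then obtain I where I: "I \<subseteq> A - N" "indep V E I" "card I = alpha V E (A - N)"
    by (metis alpha_ex)
  have "\<Union> C = A" unfolding C_def by (rule comp_union)
  then have "I = (\<Union>P\<in>C. I \<inter> P)" using I(1) by blast
  then have "card I \<le> (\<Sum>P\<in>C. card (I \<inter> P))"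
    using card_UN_le[OF finC, of "\<lambda>P. I \<inter> P"] by simp
  also have "\<dots> \<le> (\<Sum>P\<in>C. alpha V E (P - N))"
  proof (rule sum_mono)
    fix P assume P: "P \<in> C"
    have "I \<inter> P \<subseteq> P - N" using I(1) by blast
    moreover have "indep V E (I \<inter> P)" using indep_sub[OF I(2)] by blast
    moreover have "finite (P - N)" using finP[OF P] by simp
    ultimately show "card (I \<inter> P) \<le> alpha V E (P - N)" using alpha_ge by blast
  qed
  finally have s2: "alpha V E (A - N) \<le> (\<Sum>P\<in>C. alpha V E (P - N))" using I(3) by simp
  have "Conf V E A Y \<ge> (\<Sum>P\<in>C. Conf V E P Y)"
  proof -
    have "(\<Sum>P\<in>C. Conf V E P Y) = (\<Sum>P\<in>C. int (alpha V E P) - int (alpha V E (P - N)))"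
      unfolding Conf_def N_def by simp
    also have "\<dots> = (\<Sum>P\<in>C. int (alpha V E P)) - (\<Sum>P\<in>C. int (alpha V E (P - N)))"
      by (rule sum_subtractf)
    also have "\<dots> = int (\<Sum>P\<in>C. alpha V E P) - int (\<Sum>P\<in>C. alpha V E (P - N))" by simp
    also have "\<dots> \<le> int (alpha V E A) - int (alpha V E (A - N))" using s1 s2 by linarith
    finally show ?thesis unfolding Conf_def N_def .
  qed
  moreover have "(\<Sum>P\<in>C. Conf V E P Y) \<ge> (\<Sum>P\<in>{P \<in> C. Conf V E P Y \<noteq> 0}. Conf V E P Y)"
  proof (rule sum_mono2[OF finC])
    show "{P \<in> C. Conf V E P Y \<noteq> 0} \<subseteq> C" by blast
    fix P assume "P \<in> C - {P \<in> C. Conf V E P Y \<noteq> 0}"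
    then show "0 \<le> Conf V E P Y" by simp
  qed
  moreover have "(\<Sum>P\<in>{P \<in> C. Conf V E P Y \<noteq> 0}. Conf V E P Y) \<ge> (\<Sum>P\<in>{P \<in> C. Conf V E P Y \<noteq> 0}. 1)"
  proof (rule sum_mono)
    fix P assume P: "P \<in> {P \<in> C. Conf V E P Y \<noteq> 0}"
    then have "0 \<le> Conf V E P Y" using conf_nonneg finP by blast
    then show "1 \<le> Conf V E P Y" using P by simp
  qed
  ultimately show ?thesis unfolding C_def by simp
qed


lemma small_subsets:
  assumes finX: "finite X"
  shows "card {Y. Y \<subseteq> X \<and> 1 \<le> card Y \<and> card Y \<le> 3} \<le> card X ^ 2 + card X ^ 3"
proof -
  let ?f = "\<lambda>(a,b). {a,b}" and ?g = "\<lambda>(a,b,c). {a,b,c}"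
  have sub: "{Y. Y \<subseteq> X \<and> 1 \<le> card Y \<and> card Y \<le> 3} \<subseteq> ?f ` (X \<times> X) \<union> ?g ` (X \<times> X \<times> X)"
  proof
    fix Y assume Y: "Y \<in> {Y. Y \<subseteq> X \<and> 1 \<le> card Y \<and> card Y \<le> 3}"
    then have c: "card Y = 1 \<or> card Y = 2 \<or> card Y = 3" by auto
    show "Y \<in> ?f ` (X \<times> X) \<union> ?g ` (X \<times> X \<times> X)"
    proof (rule disjE[OF c])
      assume "card Y = 1"
      then obtain a where "Y = {a}" by (meson card_1_singletonE)
      then have "Y = ?f (a,a)" "(a,a) \<in> X \<times> X" using Y by auto
      then show ?thesis by blast
    next
      assume "card Y = 2 \<or> card Y = 3"
      then show ?thesis
      proof
        assume "card Y = 2"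
        then obtain a b where "Y = {a,b}" by (meson card_2_iff)
        then have "Y = ?f (a,b)" "(a,b) \<in> X \<times> X" using Y by auto
        then show ?thesis by blast
      next
        assume "card Y = 3"
        then obtain a b c where "Y = {a,b,c}" by (meson card_3_iff)
        then have "Y = ?g (a,b,c)" "(a,b,c) \<in> X \<times> X \<times> X" using Y by auto
        then show ?thesis by blast
      qed
    qed
  qed
  have "card {Y. Y \<subseteq> X \<and> 1 \<le> card Y \<and> card Y \<le> 3} \<le> card (?f ` (X \<times> X) \<union> ?g ` (X \<times> X \<times> X))"
    by (rule card_mono[OF _ sub]) (simp add: finX)
  also have "\<dots> \<le> card (?f ` (X \<times> X)) + card (?g ` (X \<times> X \<times> X))" by (rule card_Un_le)
  also have "\<dots> \<le> card (X \<times> X) + card (X \<times> X \<times> X)"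
    by (intro add_mono card_image_le) (simp_all add: finX)
  also have "\<dots> = card X ^ 2 + card X ^ 3" by (simp add: card_cartesian_product power2_eq_square power3_eq_cube)
  finally show ?thesis .
qed

lemma anchor_nbh:
  assumes "anchor_triangle V E X P"
  shows "nbh V E P \<subseteq> X \<and> 1 \<le> card (nbh V E P) \<and> card (nbh V E P) \<le> 3"
proof -
  obtain p1 p2 p3 x1 x2 x3 where P: "P \<in> components E (V - X)" "P = {p1, p2, p3}"
    "x1 \<in> X" "x2 \<in> X" "x3 \<in> X"
    and n1: "nbh V E {p1} = {p2, p3, x1}" and n2: "nbh V E {p2} = {p1, p3, x2}"
    and n3: "nbh V E {p3} = {p1, p2, x3}"
    using assms unfolding anchor_triangle_def by blast
  have PX: "P \<inter> X = {}" using comp_sub[OF P(1)] by blast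
  have "x1 \<in> nbh V E {p1}" using n1 by blast
  then have x1: "x1 \<in> nbh V E P" using P PX unfolding nbh_def by blast
  have "nbh V E P \<subseteq> {x1, x2, x3}"
  proof
    fix v assume v: "v \<in> nbh V E P"
    then have vP: "v \<notin> P" unfolding nbh_def by blast
    from v obtain u where "u \<in> P" "E u v" "v \<in> V" unfolding nbh_def by blast
    then have "(u = p1 \<and> v \<in> nbh V E {p1}) \<or> (u = p2 \<and> v \<in> nbh V E {p2}) \<or> (u = p3 \<and> v \<in> nbh V E {p3})"
      using P(2) vP unfolding nbh_def by blast
    then show "v \<in> {x1, x2, x3}" using n1 n2 n3 vP P(2) by blast
  qed
  moreover have "card {x1, x2, x3} \<le> 3" by (simp add: card_insert_if)
  ultimately have "card (nbh V E P) \<le> 3" by (meson card_mono finite.emptyI finite.insertI order_trans)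
  moreover have "1 \<le> card (nbh V E P)"
    using x1 \<open>nbh V E P \<subseteq> {x1, x2, x3}\<close>
    by (metis One_nat_def Suc_leI card_gt_0_iff empty_iff finite.emptyI finite.insertI finite_subset)
  ultimately show ?thesis using \<open>nbh V E P \<subseteq> {x1, x2, x3}\<close> P by blast
qed


theorem lemma6:
  fixes V :: "'a set" and E :: "'a \<Rightarrow> 'a \<Rightarrow> bool" and X :: "'a set"
  assumes G: "simple_graph V E"
    and XV: "X \<subseteq> V"
    and pf: "pseudoforest E (V - X)"
    and h1: "\<not> (\<exists>v\<in>X. Conf V E (V - X) {v} \<ge> int (card X))"
    and h2: "\<not> (\<exists>u\<in>X. \<exists>v\<in>X. u \<noteq> v \<and> \<not> E u v \<and> Conf V E (V - X) {u, v} \<ge> int (card X))"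
    and h3: "\<forall>u\<in>X. \<forall>v\<in>X. \<forall>w\<in>X. u \<noteq> v \<and> u \<noteq> w \<and> v \<noteq> w \<and> indep V E {u, v, w}
               \<and> Conf V E (V - X) {u, v, w} \<ge> int (card X)
               \<longrightarrow> (\<exists>P. anchor_triangle V E X P \<and> nbh V E P = {u, v, w})"
    and h4: "\<not> (\<exists>P \<in> components E (V - X). \<not> nonredundant_anchor_triangle V E X P \<and>
               (\<forall>X'. chunk V E X X' \<longrightarrow> Conf V E P X' = 0))"
  shows "card (components E (V - X)) \<le> card X ^ 4 + card X ^ 3"
proof -
  have finV: "finite V" using G unfolding simple_graph_def by blast
  have finX: "finite X" using XV finV finite_subset by blast
  define n where "n = card X"
  define C where "C = components E (V - X)"
  define NR where "NR = {P \<in> C. nonredundant_anchor_triangle V E X P}"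
  define Ch where "Ch = {Y. chunk V E X Y}"
  define S3 where "S3 = {Y. Y \<subseteq> X \<and> 1 \<le> card Y \<and> card Y \<le> 3}"
  have finC: "finite C" unfolding C_def using comp_finite finV by blast
  have S3b: "card S3 \<le> n ^ 2 + n ^ 3" unfolding S3_def n_def using small_subsets[OF finX] .
  have finS3: "finite S3"
    by (rule finite_subset[of _ "Pow X"]) (auto simp: S3_def finX)
  have ChS3: "Ch \<subseteq> S3" unfolding Ch_def S3_def chunk_def by blast
  have finCh: "finite Ch" using ChS3 finS3 finite_subset by blast
  have cardCh: "card Ch \<le> n ^ 2 + n ^ 3" using card_mono[OF finS3 ChS3] S3b by linarith
  have "card NR \<le> card S3"
  proof (rule card_inj_on_le[of "nbh V E"])
    show "inj_on (nbh V E) NR"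
    proof (rule inj_onI)
      fix P Q assume PQ: "P \<in> NR" "Q \<in> NR" "nbh V E P = nbh V E Q"
      have "nonredundant_anchor_triangle V E X P" using PQ(1) unfolding NR_def by simp
      moreover have "anchor_triangle V E X Q" using PQ(2) unfolding NR_def nonredundant_anchor_triangle_def by simp
      ultimately show "P = Q" using PQ(3) unfolding nonredundant_anchor_triangle_def by metis
    qed
    show "nbh V E ` NR \<subseteq> S3"
    proof
      fix Y assume "Y \<in> nbh V E ` NR"
      then obtain P where P: "P \<in> NR" "Y = nbh V E P" by blast
      then have "anchor_triangle V E X P" unfolding NR_def nonredundant_anchor_triangle_def by simp
      then show "Y \<in> S3" using anchor_nbh[of V E X P] P(2) unfolding S3_def by simp
    qed
    show "finite S3" by (rule finS3)
  qed
  then have cardNR: "card NR \<le> n ^ 2 + n ^ 3" using S3b by linarith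
  have cover: "C \<subseteq> NR \<union> (\<Union>Y\<in>Ch. {P \<in> C. Conf V E P Y \<noteq> 0})"
  proof
    fix P assume P: "P \<in> C"
    show "P \<in> NR \<union> (\<Union>Y\<in>Ch. {P \<in> C. Conf V E P Y \<noteq> 0})"
    proof (cases "nonredundant_anchor_triangle V E X P")
      case True then show ?thesis using P unfolding NR_def by simp
    next
      case False
      then obtain Y where "chunk V E X Y" "Conf V E P Y \<noteq> 0" using h4 P unfolding C_def by blast
      then show ?thesis using P unfolding Ch_def by blast
    qed
  qed
  have each: "card {P \<in> C. Conf V E P Y \<noteq> 0} \<le> n - 1" if "Y \<in> Ch" for Y
  proof -
    have "int (card {P \<in> C. Conf V E P Y \<noteq> 0}) \<le> Conf V E (V - X) Y"
      unfolding C_def by (rule conf_count[OF G Diff_subset])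
    moreover have "Conf V E (V - X) Y < int n" using that unfolding Ch_def chunk_def n_def by simp
    ultimately show ?thesis by linarith
  qed
  have "card C \<le> card (NR \<union> (\<Union>Y\<in>Ch. {P \<in> C. Conf V E P Y \<noteq> 0}))"
  proof (rule card_mono[OF _ cover])
    have "NR \<union> (\<Union>Y\<in>Ch. {P \<in> C. Conf V E P Y \<noteq> 0}) \<subseteq> C" unfolding NR_def by blast
    then show "finite (NR \<union> (\<Union>Y\<in>Ch. {P \<in> C. Conf V E P Y \<noteq> 0}))" using finC by (rule finite_subset)
  qed
  also have "\<dots> \<le> card NR + card (\<Union>Y\<in>Ch. {P \<in> C. Conf V E P Y \<noteq> 0})" by (rule card_Un_le)
  also have "\<dots> \<le> card NR + (\<Sum>Y\<in>Ch. card {P \<in> C. Conf V E P Y \<noteq> 0})"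
    using card_UN_le[OF finCh] by simp
  also have "\<dots> \<le> card NR + (\<Sum>Y\<in>Ch. n - 1)"
    using each by (intro add_mono sum_mono) auto
  also have "\<dots> = card NR + card Ch * (n - 1)" by simp
  also have "\<dots> \<le> (n ^ 2 + n ^ 3) + (n ^ 2 + n ^ 3) * (n - 1)"
    using cardNR cardCh by (intro add_mono mult_right_mono) auto
  also have "\<dots> = n ^ 4 + n ^ 3"
  proof (cases n)
    case 0 then show ?thesis by simp
  next
    case (Suc m)
    then have "(n ^ 2 + n ^ 3) + (n ^ 2 + n ^ 3) * (n - 1) = (n ^ 2 + n ^ 3) * n"
      by (simp only: diff_Suc_1 mult_Suc_right)
    also have "\<dots> = n ^ 4 + n ^ 3" by (simp add: eval_nat_numeral algebra_simps)
    finally show ?thesis .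
  qed
  finally show ?thesis unfolding C_def n_def .
qed

end
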